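(* Let $G=(V,q)$ be a finite connected reversible graph with non-negative Ollivier curvature, and let $\lambda_1$ be the smallest non-zero eigenvalue of $-\Delta$. Then \[ \lambda_1\ge\log(2)\cdot\frac{q_{\min}}{\operatorname{diam}(G)^2}, \] where $\operatorname{diam}(G)=\max\{d(x,y):x,y\in V\}$.
   Context: A graph $G=(V,q)$: $V$ finite, $q:V\times V\to[0,\infty)$; Laplacian $\Delta f(x)=\sum_yq(x,y)(f(y)-f(x))$. Reversible: there is $m:V\to(0,\infty)$ with $q(x,y)m(x)=q(y,x)m(y)$. $d$ is the combinatorial graph distance ($x\sim y$ iff $q(x,y)>0$). $q_{\min}=\min\{q(x,y):q(x,y)>0\}$. For $x\ne y$, $\nabla_{xy}f=(f(x)-f(y))/d(x,y)$, $\|\nabla f\|_\infty=\sup_{x\ne y}|\nabla_{xy}f|$. Ollivier curvature $\kappa(x,y)=\inf\{\nabla_{xy}\Delta f:\|\nabla f\|_\infty=1,\ \nabla_{yx}f=1\}$; non-negative means $\kappa(x,y)\ge0$ for all $x\ne y$. *)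

theory Defs
  imports Complex_Main
begin

definition laplacian :: "('a::finite \<Rightarrow> 'a \<Rightarrow> real) \<Rightarrow> ('a \<Rightarrow> real) \<Rightarrow> 'a \<Rightarrow> real" where
  "laplacian q f x = (\<Sum>y\<in>UNIV. q x y * (f y - f x))"

definition reversible :: "('a::finite \<Rightarrow> 'a \<Rightarrow> real) \<Rightarrow> bool" where
  "reversible q \<longleftrightarrow> (\<exists>m::'a \<Rightarrow> real. (\<forall>x. m x > 0) \<and> (\<forall>x y. q x y * m x = q y x * m y))"

definition adj :: "('a \<Rightarrow> 'a \<Rightarrow> real) \<Rightarrow> 'a \<Rightarrow> 'a \<Rightarrow> bool" where
  "adj q x y \<longleftrightarrow> q x y > 0"

definition gdist :: "('a \<Rightarrow> 'a \<Rightarrow> real) \<Rightarrow> 'a \<Rightarrow> 'a \<Rightarrow> nat" where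
  "gdist q x y = (LEAST n. (adj q ^^ n) x y)"

definition connected_graph :: "('a \<Rightarrow> 'a \<Rightarrow> real) \<Rightarrow> bool" where
  "connected_graph q \<longleftrightarrow> (\<forall>x y. \<exists>n. (adj q ^^ n) x y)"

definition qmin :: "('a::finite \<Rightarrow> 'a \<Rightarrow> real) \<Rightarrow> real" where
  "qmin q = Min {q x y | x y. q x y > 0}"

definition diam :: "('a::finite \<Rightarrow> 'a \<Rightarrow> real) \<Rightarrow> nat" where
  "diam q = Max {gdist q x y | x y. True}"

definition grad :: "('a \<Rightarrow> 'a \<Rightarrow> real) \<Rightarrow> ('a \<Rightarrow> real) \<Rightarrow> 'a \<Rightarrow> 'a \<Rightarrow> real" where
  "grad q f x y = (f x - f y) / real (gdist q x y)"

definition grad_norm :: "('a::finite \<Rightarrow> 'a \<Rightarrow> real) \<Rightarrow> ('a \<Rightarrow> real) \<Rightarrow> real" where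
  "grad_norm q f = Sup {\<bar>grad q f x y\<bar> | x y. x \<noteq> y}"

definition ollivier_curvature :: "('a::finite \<Rightarrow> 'a \<Rightarrow> real) \<Rightarrow> 'a \<Rightarrow> 'a \<Rightarrow> real" where
  "ollivier_curvature q x y =
     Inf {grad q (laplacian q f) x y | f. grad_norm q f = 1 \<and> grad q f y x = 1}"

definition nonneg_ollivier :: "('a::finite \<Rightarrow> 'a \<Rightarrow> real) \<Rightarrow> bool" where
  "nonneg_ollivier q \<longleftrightarrow> (\<forall>x y. x \<noteq> y \<longrightarrow> ollivier_curvature q x y \<ge> 0)"

text \<open>lam is an eigenvalue of -Delta (real eigenvalues; -Delta is self-adjoint in l^2(m)).\<close>
definition neg_lap_eigenvalue :: "('a::finite \<Rightarrow> 'a \<Rightarrow> real) \<Rightarrow> real \<Rightarrow> bool" where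
  "neg_lap_eigenvalue q lam \<longleftrightarrow>
     (\<exists>f. f \<noteq> (\<lambda>_. 0) \<and> (\<forall>x. - laplacian q f x = lam * f x))"

end

theory Submission
  imports Defs
begin
lemma adj_sym:
  assumes "reversible q" "adj q a b" shows "adj q b a"
proof -
  obtain m :: "'a \<Rightarrow> real" where m: "\<forall>x. m x > 0" "\<forall>x y. q x y * m x = q y x * m y"
    using assms(1) unfolding reversible_def by blast
  have "q a b * m a > 0" using assms(2) m(1) unfolding adj_def by simp
  hence "q b a * m b > 0" using m(2) by metis
  thus ?thesis using m(1)[rule_format, of b] unfolding adj_def by (auto simp add: zero_less_mult_iff)
qed

lemma relpowp_sym:
  assumes "\<And>a b. R a b \<Longrightarrow> R b a"
  shows "(R ^^ n) a b \<Longrightarrow> (R ^^ n) b a"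
proof (induction n arbitrary: a b)
  case 0 thus ?case by (auto elim: relpowp_0_E)
next
  case (Suc n)
  from Suc.prems obtain c where "(R ^^ n) a c" "R c b" by (auto elim: relpowp_Suc_E)
  thus ?case using Suc.IH assms relpowp_Suc_I2 by metis
qed

lemma d_walk: "connected_graph q \<Longrightarrow> (adj q ^^ gdist q a b) a b"
  unfolding gdist_def connected_graph_def by (metis LeastI_ex)

lemma d_le: "(adj q ^^ n) a b \<Longrightarrow> gdist q a b \<le> n"
  unfolding gdist_def by (rule Least_le)

lemma d_refl: "gdist q a a = 0"
  using d_le[where n=0 and a=a and b=a and q=q] by (simp add: relpowp_0_I)

lemma d_zero: "connected_graph q \<Longrightarrow> gdist q a b = 0 \<Longrightarrow> a = b"
  using d_walk[of q a b] by (auto elim: relpowp_0_E)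

lemma d_tri: "connected_graph q \<Longrightarrow> gdist q a c \<le> gdist q a b + gdist q b c"
  using d_walk[of q a b] d_walk[of q b c] relpowp_trans d_le by metis

lemma d_sym: "reversible q \<Longrightarrow> connected_graph q \<Longrightarrow> gdist q a b = gdist q b a"
  using d_walk[of q a b] d_walk[of q b a] relpowp_sym[of "adj q"] adj_sym d_le
  by (metis le_antisym)

lemma d_adj: "adj q a b \<Longrightarrow> gdist q a b \<le> 1"
  using d_le[where n=1 and a=a and b=b and q=q] by (metis relpowp_1)

lemma gn_lip:
  fixes g :: "'a::finite \<Rightarrow> real"
  assumes con: "connected_graph q" and gn: "grad_norm q g = 1"
  shows "\<bar>g a - g b\<bar> \<le> real (gdist q a b)"
proof (cases "a = b")
  case True thus ?thesis by simp
next
  case False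
  have fin: "finite {\<bar>grad q g a b\<bar> | a b. a \<noteq> b}"
    by (rule finite_subset[of _ "(\<lambda>(a,b). \<bar>grad q g a b\<bar>) ` UNIV"]) auto
  have "\<bar>grad q g a b\<bar> \<le> grad_norm q g"
    unfolding grad_norm_def using False by (intro cSup_upper bdd_above_finite[OF fin]) auto
  hence le: "\<bar>g a - g b\<bar> / real (gdist q a b) \<le> 1" using gn by (simp add: grad_def abs_divide)
  have "gdist q a b \<noteq> 0" using d_zero[OF con] False by blast
  hence "real (gdist q a b) > 0" by simp
  thus ?thesis using le by (simp add: divide_le_eq)
qed

theorem mainTheorem17:
  fixes q :: "'a::finite \<Rightarrow> 'a \<Rightarrow> real"
  assumes "\<forall>x y. q x y \<ge> 0"
    and "reversible q"
    and "connected_graph q"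
    and "nonneg_ollivier q"
    and "neg_lap_eigenvalue q lam" and "lam \<noteq> 0"
  shows "lam \<ge> ln 2 * qmin q / (real (diam q))^2"
proof -
  note qnn = assms(1)[rule_format] and rev = assms(2) and con = assms(3)
  let ?d = "gdist q"
  have sym: "\<And>a b. ?d a b = ?d b a" using d_sym rev con by metis
  have tri: "\<And>a b c. ?d a c \<le> ?d a b + ?d b c" using d_tri con by metis
  have dpos: "\<And>a b. a \<noteq> b \<Longrightarrow> ?d a b \<ge> 1" using d_zero con by (metis less_one not_le)
  obtain f where f0: "f \<noteq> (\<lambda>_. 0)" and eig: "\<And>x. - laplacian q f x = lam * f x"
    using assms(5) unfolding neg_lap_eigenvalue_def by blast
  have "\<exists>a b. f a < f b"
  proof (rule ccontr)
    assume "\<not> ?thesis"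
    hence eq: "\<And>a b. f a = f b" by (metis not_less_iff_gr_or_eq)
    have "\<And>x. laplacian q f x = 0"
    proof -
      fix x
      have "\<And>y. q x y * (f y - f x) = 0" using eq[of _ x] by simp
      thus "laplacian q f x = 0" unfolding laplacian_def by (simp only: sum.neutral_const)
    qed
    hence "\<And>x. f x = 0" using eig assms(6) by (metis mult_eq_0_iff neg_equal_0_iff_equal)
    thus False using f0 by auto
  qed
  then obtain a0 b0 where ab0: "f a0 < f b0" by blast
  define D where "D = diam q"
  have finD: "finite {gdist q x y |x y. True}"
    by (rule finite_subset[of _ "(\<lambda>(x,y). gdist q x y) ` UNIV"]) auto
  have dle: "\<And>a b. ?d a b \<le> D" unfolding D_def diam_def by (rule Max_ge[OF finD]) auto
  define N where "N = real D + 1"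
  define h where "h = (\<lambda>t::nat. real t * (2*N - real t))"
  have hpos: "\<And>a b. a \<noteq> b \<Longrightarrow> h (?d a b) > 0"
  proof -
    fix a b :: 'a assume "a \<noteq> b"
    hence "real (?d a b) \<ge> 1" using dpos by simp
    moreover have "real (?d a b) \<le> real D" using dle by simp
    ultimately show "h (?d a b) > 0" unfolding h_def N_def by (intro mult_pos_pos) auto
  qed
  define S where "S = {(f b - f a) / h (?d a b) | a b. a \<noteq> b}"
  have finS: "finite S" unfolding S_def
    by (rule finite_subset[of _ "(\<lambda>(a,b). (f b - f a) / h (?d a b)) ` UNIV"]) auto
  have a0b0: "a0 \<noteq> b0" using ab0 by auto
  have inS: "(f b0 - f a0) / h (?d a0 b0) \<in> S" unfolding S_def using a0b0 by blast
  define M where "M = Max S"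
  have "M \<in> S" using finS inS unfolding M_def by (intro Max_in) auto
  then obtain x y where xy: "x \<noteq> y" "M = (f y - f x) / h (?d x y)" unfolding S_def by blast
  have "(f b0 - f a0) / h (?d a0 b0) > 0" using ab0 hpos[OF a0b0] by simp
  moreover have "(f b0 - f a0) / h (?d a0 b0) \<le> M" unfolding M_def using finS inS by simp
  ultimately have Mpos: "M > 0" by linarith
  have fb: "\<And>a b. f b - f a \<le> M * h (?d a b)"
  proof -
    fix a b
    show "f b - f a \<le> M * h (?d a b)"
    proof (cases "a = b")
      case True thus ?thesis by (simp add: d_refl h_def)
    next
      case False
      have "(f b - f a) / h (?d a b) \<in> S" unfolding S_def using False by blast
      hence "(f b - f a) / h (?d a b) \<le> M" unfolding M_def using finS by simp
      thus ?thesis using hpos[OF False] by (simp add: divide_le_eq mult.commute)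
    qed
  qed
  define k where "k = ?d x y"
  have k1: "k \<ge> 1" unfolding k_def using dpos xy(1) by simp
  have kD: "k \<le> D" unfolding k_def using dle by simp
  have hk: "h k > 0" unfolding k_def using hpos xy(1) by simp
  have fxy: "f y - f x = M * h k" using xy hk by (simp add: k_def)
  define c where "c = 2*N - 2*real k - 1"
  have cpos: "c \<ge> 1" unfolding c_def N_def using kD by simp
  have conc: "\<And>t. h t \<le> h k + c * (real t - real k)"
  proof -
    fix t :: nat
    have nn: "(real t - real k) * (real t - real k - 1) \<ge> 0"
    proof (cases "t \<le> k")
      case True thus ?thesis by (intro mult_nonpos_nonpos) auto
    next
      case False thus ?thesis by (intro mult_nonneg_nonneg) auto
    qed
    have "h t = h k + c * (real t - real k) - (real t - real k) * (real t - real k - 1)"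
      by (simp add: h_def c_def algebra_simps)
    thus "h t \<le> h k + c * (real t - real k)" using nn by linarith
  qed
  have hkm: "h (k - 1) = h k - c - 2" using k1 by (simp add: h_def c_def of_nat_diff algebra_simps)
  define s where "s = M * c"
  have spos: "s > 0" unfolding s_def using Mpos cpos by simp
  define b where "b = (\<lambda>v. (f v - f y) / s)"
  define g where "g = (\<lambda>v. Max (range (\<lambda>w. b w - real (?d w v))))"
  have Gge: "\<And>v w. b w - real (?d w v) \<le> g v" unfolding g_def by (rule Max_ge) auto
  have G1: "\<And>v. b v \<le> g v" using Gge[of _ _] d_refl by (metis diff_zero of_nat_0)
  have G2: "\<And>v. g v \<le> - real k + (f v - f x) / s"
  proof -
    fix v
    show "g v \<le> - real k + (f v - f x) / s" unfolding g_def
    proof (rule Max.boundedI, simp, simp, safe)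
      fix w
      have "f w - f v \<le> M * h (?d v w)" by (rule fb)
      also have "\<dots> \<le> M * (h k + c * (real (?d v w) - real k))"
        using conc Mpos by (intro mult_left_mono) auto
      also have "\<dots> = (f y - f x) + s * (real (?d w v) - real k)"
        using fxy sym by (simp add: s_def algebra_simps)
      finally have "f w - f y - s * real (?d w v) \<le> - s * real k + (f v - f x)"
        by (simp add: algebra_simps)
      hence "((f w - f y) - s * real (?d w v)) / s \<le> (- s * real k + (f v - f x)) / s"
        using spos by (intro divide_right_mono) auto
      moreover have "((f w - f y) - s * real (?d w v)) / s = b w - real (?d w v)"
        using spos unfolding b_def by (simp add: diff_divide_distrib)
      moreover have "(- s * real k + (f v - f x)) / s = - real k + (f v - f x) / s"
        using spos by (simp add: add_divide_distrib diff_divide_distrib)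
      ultimately show "b w - real (?d w v) \<le> - real k + (f v - f x) / s" by simp
    qed
  qed
  have G3: "\<And>v v'. g v \<le> g v' + real (?d v v')"
  proof -
    fix v v'
    have gv: "g v = Max (range (\<lambda>w. b w - real (?d w v)))" by (simp add: g_def)
    show "g v \<le> g v' + real (?d v v')" unfolding gv
    proof (rule Max.boundedI, simp, simp, safe)
      fix w
      have "?d w v' \<le> ?d w v + ?d v v'" by (rule tri)
      hence "b w - real (?d w v) \<le> b w - real (?d w v') + real (?d v v')" by simp
      also have "\<dots> \<le> g v' + real (?d v v')" using Gge by simp
      finally show "b w - real (?d w v) \<le> g v' + real (?d v v')" .
    qed
  qed
  have gx: "g x = - real k"
    using G2[of x] Gge[where v=x and w=y] sym[of y x] unfolding b_def k_def by simp
  have gy: "g y = 0"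
    using G1[of y] G3[of y x] gx sym[of y x] unfolding b_def k_def by simp
  have gradg: "grad q g y x = 1"
    using gx gy k1 sym[of y x] unfolding grad_def k_def by simp
  have gnorm: "grad_norm q g = 1"
    unfolding grad_norm_def
  proof (rule cSup_eq_non_empty)
    show "{\<bar>grad q g a b\<bar> | a b. a \<noteq> b} \<noteq> {}" using xy(1) by blast
  next
    fix z assume "z \<in> {\<bar>grad q g a b\<bar> | a b. a \<noteq> b}"
    then obtain a a' where z: "z = \<bar>grad q g a a'\<bar>" "a \<noteq> a'" by blast
    have "\<bar>g a - g a'\<bar> \<le> real (?d a a')"
      using G3[of a a'] G3[of a' a] sym[of a a'] by linarith
    moreover have "real (?d a a') > 0" using dpos[OF z(2)] by simp
    ultimately show "z \<le> 1" unfolding z grad_def by (simp add: abs_divide divide_le_eq)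
  next
    fix w assume "\<And>z. z \<in> {\<bar>grad q g a b\<bar> | a b. a \<noteq> b} \<Longrightarrow> z \<le> w"
    moreover have "\<bar>grad q g y x\<bar> \<in> {\<bar>grad q g a b\<bar> | a b. a \<noteq> b}" using xy(1) by blast
    ultimately show "1 \<le> w" using gradg by fastforce
  qed
  define C where "C = (\<Sum>z\<in>UNIV. q x z * real (?d x z)) + (\<Sum>z\<in>UNIV. q y z * real (?d y z))"
  have bdd: "bdd_below {grad q (laplacian q g') x y | g'. grad_norm q g' = 1 \<and> grad q g' y x = 1}"
  proof (rule bdd_belowI[of _ "- C / real k"], safe)
    fix g' :: "'a \<Rightarrow> real" assume gn': "grad_norm q g' = 1"
    have L: "\<And>a a'. \<bar>g' a - g' a'\<bar> \<le> real (?d a a')" using gn_lip[OF con gn'] by blast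
    have "laplacian q g' x \<ge> - (\<Sum>z\<in>UNIV. q x z * real (?d x z))"
      unfolding laplacian_def sum_negf[symmetric]
    proof (rule sum_mono)
      fix z
      have "g' z - g' x \<ge> - real (?d x z)" using L[of x z] by linarith
      hence "q x z * (g' z - g' x) \<ge> q x z * (- real (?d x z))" using qnn by (intro mult_left_mono) auto
      thus "- (q x z * real (?d x z)) \<le> q x z * (g' z - g' x)" by simp
    qed
    moreover have "laplacian q g' y \<le> (\<Sum>z\<in>UNIV. q y z * real (?d y z))"
      unfolding laplacian_def
    proof (rule sum_mono)
      fix z
      have "g' z - g' y \<le> real (?d y z)" using L[of z y] sym[of z y] by linarith
      thus "q y z * (g' z - g' y) \<le> q y z * real (?d y z)" using qnn by (intro mult_left_mono) auto
    qed
    ultimately have "laplacian q g' x - laplacian q g' y \<ge> - C" unfolding C_def by linarith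
    moreover have "real k > 0" using k1 by simp
    ultimately show "- C / real k \<le> grad q (laplacian q g') x y"
      unfolding grad_def k_def[symmetric] using divide_right_mono[of "- C" _ "real k"] by simp
  qed
  have "0 \<le> ollivier_curvature q x y" using assms(4) xy(1) unfolding nonneg_ollivier_def by blast
  also have "\<dots> \<le> grad q (laplacian q g) x y"
    unfolding ollivier_curvature_def using gnorm gradg by (intro cInf_lower[OF _ bdd]) blast
  finally have "0 \<le> (laplacian q g x - laplacian q g y) / real k" unfolding grad_def k_def .
  hence curv: "laplacian q g x \<ge> laplacian q g y" using k1 by (simp add: divide_nonneg_pos zero_le_divide_iff)
  obtain m where km: "k = Suc m" using k1 by (cases k) auto
  have walk: "(adj q ^^ Suc m) x y" using d_walk[OF con, of x y] km k_def by simp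
  obtain x1 where x1: "adj q x x1" "(adj q ^^ m) x1 y" using relpowp_Suc_D2[OF walk] by blast
  obtain y1 where y1: "(adj q ^^ m) x y1" "adj q y1 y" using walk by (auto elim: relpowp_Suc_E)
  have dxx1: "?d x x1 \<le> 1" by (rule d_adj[OF x1(1)])
  have "?d x1 y \<le> m" by (rule d_le[OF x1(2)])
  moreover have "k \<le> ?d x x1 + ?d x1 y" unfolding k_def by (rule tri)
  ultimately have dx1y: "?d x1 y = k - 1" using dxx1 km by linarith
  have dy1y: "?d y1 y \<le> 1" by (rule d_adj[OF y1(2)])
  have "?d x y1 \<le> m" by (rule d_le[OF y1(1)])
  moreover have "k \<le> ?d x y1 + ?d y1 y" unfolding k_def by (rule tri)
  ultimately have dxy1: "?d x y1 = k - 1" using dy1y km by linarith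
  have adjy: "adj q y y1" using adj_sym[OF rev y1(2)] .
  define u where "u = (\<lambda>v. f v - s * g v)"
  have lapdec: "\<And>v. laplacian q f v = laplacian q u v + s * laplacian q g v"
  proof -
    fix v
    have "laplacian q f v = (\<Sum>z\<in>UNIV. q v z * (u z - u v) + s * (q v z * (g z - g v)))"
      unfolding laplacian_def u_def by (rule sum.cong) (auto simp: algebra_simps)
    thus "laplacian q f v = laplacian q u v + s * laplacian q g v"
      unfolding laplacian_def by (simp add: sum.distrib sum_distrib_left)
  qed
  have ux: "\<And>v. u v - u x \<ge> 0"
  proof -
    fix v
    have "s * g v \<le> s * (- real k + (f v - f x) / s)" using G2 spos by (intro mult_left_mono) auto
    also have "\<dots> = - s * real k + (f v - f x)" using spos by (simp add: field_simps)
    finally show "u v - u x \<ge> 0" unfolding u_def using gx by (simp add: algebra_simps)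
  qed
  have uy: "\<And>v. u y - u v \<ge> 0"
  proof -
    fix v
    have "s * b v \<le> s * g v" using G1 spos by (intro mult_left_mono) auto
    hence "f v - f y \<le> s * g v" using spos unfolding b_def by simp
    thus "u y - u v \<ge> 0" unfolding u_def using gy by simp
  qed
  have ux1: "u x1 - u x \<ge> 2 * M"
  proof -
    have "g x1 - g x \<le> 1" using G3[of x1 x] sym[of x1 x] dxx1 by simp
    hence "s * (g x1 - g x) \<le> s" using spos by (simp add: mult_left_le)
    moreover have "f y - f x1 \<le> M * h (k - 1)" using fb[where a=x1 and b=y] dx1y by simp
    moreover have "M * h k - M * h (k - 1) = s + 2 * M" unfolding hkm s_def by (simp add: algebra_simps)
    moreover have "s * (g x1 - g x) = s * g x1 - s * g x" by (simp add: algebra_simps)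
    ultimately show ?thesis unfolding u_def using fxy by linarith
  qed
  have uy1: "u y - u y1 \<ge> 2 * M"
  proof -
    have "g y - g y1 \<le> 1" using G3[of y y1] sym[of y y1] dy1y by simp
    hence "s * (g y - g y1) \<le> s" using spos by (simp add: mult_left_le)
    moreover have "f y1 - f x \<le> M * h (k - 1)" using fb[where a=x and b=y1] dxy1 by simp
    moreover have "M * h k - M * h (k - 1) = s + 2 * M" unfolding hkm s_def by (simp add: algebra_simps)
    moreover have "s * (g y - g y1) = s * g y - s * g y1" by (simp add: algebra_simps)
    ultimately show ?thesis unfolding u_def using fxy by linarith
  qed
  define Q where "Q = {q a b | a b. q a b > 0}"
  have finQ: "finite Q" unfolding Q_def
    by (rule finite_subset[of _ "(\<lambda>(a,b). q a b) ` UNIV"]) auto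
  have qx1: "q x x1 \<in> Q" and qy1: "q y y1 \<in> Q" using x1(1) adjy unfolding Q_def adj_def by blast+
  have qm1: "qmin q \<le> q x x1" and qm2: "qmin q \<le> q y y1"
    unfolding qmin_def Q_def[symmetric] using finQ qx1 qy1 by auto
  have "qmin q \<in> Q" unfolding qmin_def Q_def[symmetric] using finQ qx1 by (intro Min_in) auto
  hence qmpos: "qmin q > 0" unfolding Q_def by auto
  have Lx: "laplacian q u x \<ge> q x x1 * (u x1 - u x)" unfolding laplacian_def
    by (rule member_le_sum) (auto intro!: mult_nonneg_nonneg qnn ux)
  have "- laplacian q u y = (\<Sum>z\<in>UNIV. q y z * (u y - u z))"
    unfolding laplacian_def sum_negf[symmetric] by (rule sum.cong) (auto simp: algebra_simps)
  also have "\<dots> \<ge> q y y1 * (u y - u y1)"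
    by (rule member_le_sum) (auto intro!: mult_nonneg_nonneg qnn uy)
  finally have Ly: "- laplacian q u y \<ge> q y y1 * (u y - u y1)" .
  have "qmin q * (2 * M) \<le> q x x1 * (u x1 - u x)"
    using qm1 ux1 qmpos Mpos by (intro mult_mono) auto
  moreover have "qmin q * (2 * M) \<le> q y y1 * (u y - u y1)"
    using qm2 uy1 qmpos Mpos by (intro mult_mono) auto
  moreover have "laplacian q f x - laplacian q f y = lam * (f y - f x)"
    using eig[of x] eig[of y] by (simp add: algebra_simps)
  moreover have "laplacian q f x - laplacian q f y
       = laplacian q u x - laplacian q u y + s * (laplacian q g x - laplacian q g y)"
    using lapdec[of x] lapdec[of y] by (simp add: algebra_simps)
  moreover have "s * (laplacian q g x - laplacian q g y) \<ge> 0" using curv spos by simp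
  ultimately have "lam * (f y - f x) \<ge> qmin q * (2 * M) + qmin q * (2 * M)" using Lx Ly by linarith
  hence "lam * (M * h k) \<ge> 4 * qmin q * M" unfolding fxy by (simp add: algebra_simps)
  hence "(lam * h k) * M \<ge> (4 * qmin q) * M" by (simp add: algebra_simps)
  hence lamh: "lam * h k \<ge> 4 * qmin q" using Mpos by simp
  have hkN: "h k \<le> N^2"
  proof -
    have "N^2 - h k = (N - real k)^2" unfolding h_def by (simp add: power2_eq_square algebra_simps)
    thus ?thesis by (metis diff_ge_0_iff_ge zero_le_power2)
  qed
  have D1: "real D \<ge> 1" using k1 kD by simp
  have "lam \<ge> 4 * qmin q / h k" using lamh hk by (simp add: divide_le_eq)
  moreover have "4 * qmin q / N^2 \<le> 4 * qmin q / h k"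
    proof (rule divide_left_mono)
    show "h k \<le> N^2" by (rule hkN)
    show "0 \<le> 4 * qmin q" using qmpos by simp
    have "N^2 > 0" using hk hkN by linarith
    thus "0 < N^2 * h k" using hk by simp
  qed
  moreover have "ln 2 * qmin q / (real D)^2 \<le> 4 * qmin q / N^2"
  proof -
    have "N \<le> 2 * real D" unfolding N_def using D1 by simp
    hence "N^2 \<le> (2 * real D)^2" using D1 N_def by (intro power_mono) auto
    hence n2: "N^2 \<le> 4 * (real D)^2" by (simp add: power_mult_distrib)
    have "ln 2 * qmin q \<le> qmin q" using ln_2_less_1 qmpos by simp
    hence "ln 2 * qmin q / (real D)^2 \<le> qmin q / (real D)^2" using D1 by (simp add: divide_right_mono)
    also have "\<dots> \<le> 4 * qmin q / N^2"
    proof -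
      have "qmin q * N^2 \<le> qmin q * (4 * (real D)^2)" using n2 qmpos by (intro mult_left_mono) auto
      moreover have "N^2 > 0" "(real D)^2 > 0" using D1 N_def by auto
      ultimately show ?thesis by (simp add: divide_simps algebra_simps)
    qed
    finally show ?thesis .
  qed
  ultimately show ?thesis unfolding D_def by linarith
qed

end
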